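(* Let $\lambda_1<\dots<\lambda_k$ be real, $I=(i_1,\dots,i_k)$ positive integers with sum $n$, and $\Lambda$ the diagonal matrix with $\lambda_j$ appearing $i_j$ times, in increasing order. Let $\xi_I$ be the vector field on ${\rm Fl}_I(\mathbb R)={\rm SO}(n,\mathbb R)/G$, $G={\rm SO}(n,\mathbb R)\cap({\rm O}(i_1)\times\dots\times{\rm O}(i_k))$, induced by the right-$G$-invariant vector field $M(\Psi)=\big((\Psi\Lambda\Psi^{-1})_+-(\Psi\Lambda\Psi^{-1})_-\big)\Psi$ on ${\rm SO}(n,\mathbb R)$. Then the singular points (zeros) of $\xi_I$ are indexed by the multiset permutations $S_n^I$: they are exactly the cosets $[\Psi]$ for which $\Psi\Lambda\Psi^{-1}$ is diagonal, and $\tau\in S_n^I$ corresponds to the coset $[\Psi]$ with $\Psi\Lambda\Psi^{-1}=\operatorname{diag}(\lambda_{\tau(1)},\dots,\lambda_{\tau(n)})$.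
   Context: For a square matrix $X$, $X_+$ (resp. $X_-$) is its strictly upper (resp. strictly lower) triangular part. $S_n^I$ is the set of surjective maps $\tau\colon\{1,\dots,n\}\to\{1,\dots,k\}$ with $|\tau^{-1}(j)|=i_j$ for all $j$. The coset $[\Psi]\in{\rm SO}(n,\mathbb R)/G$ determines the matrix $\Psi\Lambda\Psi^{-1}$ uniquely. *)

theory Defs
  imports "Jordan_Normal_Form.Determinant" "HOL-Library.FuncSet"
begin

text \<open>Conventions: indices are 0-based. Blocks j < k have sizes I j (all > 0),
  n = (sum over j<k of I j). Matrices are n x n real matrices (Jordan_Normal_Form).\<close>

definition block_of :: "(nat \<Rightarrow> nat) \<Rightarrow> nat \<Rightarrow> nat" where
  "block_of I p = (LEAST j. p < (\<Sum>l\<le>j. I l))"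

definition diag_of :: "nat \<Rightarrow> (nat \<Rightarrow> real) \<Rightarrow> real mat" where
  "diag_of n d = mat n n (\<lambda>(p,q). if p = q then d p else 0)"

definition Lam :: "nat \<Rightarrow> (nat \<Rightarrow> nat) \<Rightarrow> (nat \<Rightarrow> real) \<Rightarrow> real mat" where
  "Lam n I lam = diag_of n (\<lambda>p. lam (block_of I p))"

definition SO_mat :: "nat \<Rightarrow> real mat set" where
  "SO_mat n = {P. P \<in> carrier_mat n n \<and> transpose_mat P * P = 1\<^sub>m n \<and> det P = 1}"

text \<open>G = SO(n) intersected with O(i_1) x ... x O(i_k) (block-diagonal orthogonal matrices).\<close>
definition G_grp :: "nat \<Rightarrow> (nat \<Rightarrow> nat) \<Rightarrow> real mat set" where
  "G_grp n I = {g \<in> SO_mat n. \<forall>p<n. \<forall>q<n. block_of I p \<noteq> block_of I q \<longrightarrow> g $$ (p,q) = 0}"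

definition coset :: "nat \<Rightarrow> (nat \<Rightarrow> nat) \<Rightarrow> real mat \<Rightarrow> real mat set" where
  "coset n I P = (\<lambda>g. P * g) ` G_grp n I"

definition Flag :: "nat \<Rightarrow> (nat \<Rightarrow> nat) \<Rightarrow> real mat set set" where
  "Flag n I = coset n I ` SO_mat n"

definition strict_upper :: "real mat \<Rightarrow> real mat" where
  "strict_upper X = mat (dim_row X) (dim_col X) (\<lambda>(p,q). if p < q then X $$ (p,q) else 0)"

definition strict_lower :: "real mat \<Rightarrow> real mat" where
  "strict_lower X = mat (dim_row X) (dim_col X) (\<lambda>(p,q). if q < p then X $$ (p,q) else 0)"

text \<open>Psi Lambda Psi^{-1}; for Psi in SO(n), Psi^{-1} = Psi^T.\<close>
definition conjL :: "nat \<Rightarrow> (nat \<Rightarrow> nat) \<Rightarrow> (nat \<Rightarrow> real) \<Rightarrow> real mat \<Rightarrow> real mat" where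
  "conjL n I lam P = P * Lam n I lam * transpose_mat P"

definition Mfield :: "nat \<Rightarrow> (nat \<Rightarrow> nat) \<Rightarrow> (nat \<Rightarrow> real) \<Rightarrow> real mat \<Rightarrow> real mat" where
  "Mfield n I lam P = (strict_upper (conjL n I lam P) - strict_lower (conjL n I lam P)) * P"

text \<open>V is a vertical tangent vector at P to the fibre C (a coset), i.e. lies in the
  kernel of the differential of the projection SO(n) -> SO(n)/G: it is the velocity at 0
  of a (entrywise differentiable) curve lying in C and passing through P at time 0.\<close>
definition vertical :: "nat \<Rightarrow> real mat set \<Rightarrow> real mat \<Rightarrow> real mat \<Rightarrow> bool" where
  "vertical n C P V \<longleftrightarrow> (\<exists>\<gamma> :: real \<Rightarrow> real mat.
     (\<forall>t. \<gamma> t \<in> C) \<and> \<gamma> 0 = P \<and>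
     (\<forall>p<n. \<forall>q<n. ((\<lambda>t. \<gamma> t $$ (p,q)) has_real_derivative V $$ (p,q)) (at 0)))"

text \<open>The induced vector field xi_I vanishes at the coset C = [Psi] iff
  d pi_Psi (M(Psi)) = 0, i.e. M(Psi) is vertical (independent of the representative
  by right G-invariance of M).\<close>
definition xi_zero :: "nat \<Rightarrow> (nat \<Rightarrow> nat) \<Rightarrow> (nat \<Rightarrow> real) \<Rightarrow> real mat set \<Rightarrow> bool" where
  "xi_zero n I lam C \<longleftrightarrow> (\<exists>P\<in>C. vertical n C P (Mfield n I lam P))"

definition is_diag :: "real mat \<Rightarrow> bool" where
  "is_diag X \<longleftrightarrow> (\<forall>p<dim_row X. \<forall>q<dim_col X. p \<noteq> q \<longrightarrow> X $$ (p,q) = 0)"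

text \<open>S_n^I: maps tau : {0..<n} -> {0..<k} with |tau^{-1}(j)| = I j (surjective since I j > 0).\<close>
definition multiset_perms :: "nat \<Rightarrow> nat \<Rightarrow> (nat \<Rightarrow> nat) \<Rightarrow> (nat \<Rightarrow> nat) set" where
  "multiset_perms n k I = {\<tau> \<in> {0..<n} \<rightarrow>\<^sub>E {0..<k}. \<forall>j<k. card {p \<in> {0..<n}. \<tau> p = j} = I j}"

end

theory Submission
  imports Defs
begin



lemma mult_ent:
  assumes "A \<in> carrier_mat n m" "B \<in> carrier_mat m r" "i < n" "j < r"
  shows "(A * B) $$ (i,j) = (\<Sum>l<m. A $$ (i,l) * B $$ (l,j))"
  using assms by (auto simp: scalar_prod_def row_def col_def lessThan_atLeast0)

lemma diag_carrier[simp]: "diag_of n d \<in> carrier_mat n n"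
  by (simp add: diag_of_def)

lemma diag_ent[simp]: "p < n \<Longrightarrow> q < n \<Longrightarrow> diag_of n d $$ (p,q) = (if p = q then d p else 0)"
  by (simp add: diag_of_def)

lemma mult_diag_right:
  assumes "X \<in> carrier_mat m n" "p < m" "q < n"
  shows "(X * diag_of n d) $$ (p,q) = X $$ (p,q) * d q"
proof -
  have "(X * diag_of n d) $$ (p,q) = (\<Sum>l<n. X $$ (p,l) * diag_of n d $$ (l,q))"
    using assms by (intro mult_ent[of _ m n _ n]) auto
  also have "\<dots> = (\<Sum>l<n. if l = q then X $$ (p,q) * d q else 0)"
    using assms by (intro sum.cong) auto
  finally show ?thesis using assms by simp
qed

lemma mult_diag_left:
  assumes "X \<in> carrier_mat n m" "p < n" "q < m"
  shows "(diag_of n d * X) $$ (p,q) = d p * X $$ (p,q)"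
proof -
  have "(diag_of n d * X) $$ (p,q) = (\<Sum>l<n. diag_of n d $$ (p,l) * X $$ (l,q))"
    using assms by (intro mult_ent[of _ n n _ m]) auto
  also have "\<dots> = (\<Sum>l<n. if l = p then d p * X $$ (p,q) else 0)"
    using assms by (intro sum.cong) auto
  finally show ?thesis using assms by simp
qed

lemma SO_carrier: "P \<in> SO_mat n \<Longrightarrow> P \<in> carrier_mat n n" by (simp add: SO_mat_def)

lemma SO_right: "P \<in> SO_mat n \<Longrightarrow> P * transpose_mat P = 1\<^sub>m n"
  unfolding SO_mat_def using mat_mult_left_right_inverse[of "transpose_mat P" n P]
  by auto

lemma SO_mult: assumes "P \<in> SO_mat n" "Q \<in> SO_mat n" shows "P * Q \<in> SO_mat n"
proof -
  have c: "P \<in> carrier_mat n n" "Q \<in> carrier_mat n n" using assms by (auto simp: SO_mat_def)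
  have "transpose_mat (P*Q) * (P*Q) = transpose_mat Q * (transpose_mat P * P) * Q"
    using c by (simp add: transpose_mult[of _ n n _ n] assoc_mult_mat[of _ n n _ n _ n])
  also have "\<dots> = 1\<^sub>m n" using assms c by (auto simp: SO_mat_def)
  finally show ?thesis using assms c by (auto simp: SO_mat_def det_mult)
qed

lemma SO_transpose: assumes "P \<in> SO_mat n" shows "transpose_mat P \<in> SO_mat n"
  using assms SO_right[OF assms] by (auto simp: SO_mat_def det_transpose)

lemma one_SO: "1\<^sub>m n \<in> SO_mat n"
  by (simp add: SO_mat_def det_one)



lemma block_basic:
  assumes "q < (\<Sum>j<k. I j)"
  shows "block_of I q < k \<and> q < (\<Sum>l<block_of I q. I l) + I (block_of I q) \<and> (\<Sum>l<block_of I q. I l) \<le> q"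
proof -
  let ?P = "\<lambda>j. q < (\<Sum>l\<le>j. I l)"
  have k0: "k > 0" using assms by (cases k) auto
  have "{..k-1} = {..<k}" using k0 by auto
  then have Pk: "?P (k-1)" using assms by simp
  have b: "block_of I q = (LEAST j. ?P j)" by (simp add: block_of_def)
  have Pb: "?P (block_of I q)" unfolding b by (rule LeastI[of ?P, OF Pk])
  have le: "block_of I q \<le> k - 1" unfolding b by (rule Least_le[of ?P, OF Pk])
  have lo: "(\<Sum>l<block_of I q. I l) \<le> q"
  proof (cases "block_of I q")
    case 0 then show ?thesis by simp
  next
    case (Suc m)
    have "\<not> ?P m" using not_less_Least[of m ?P] Suc b by simp
    moreover have "{..<Suc m} = {..m}" by auto
    ultimately show ?thesis using Suc by simp
  qed
  have "(\<Sum>l\<le>block_of I q. I l) = (\<Sum>l<block_of I q. I l) + I (block_of I q)"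
    by (simp add: lessThan_Suc_atMost[symmetric])
  then show ?thesis using Pb le lo k0 by auto
qed

lemma block_iff:
  assumes "q < (\<Sum>j<k. I j)" "j < k"
  shows "block_of I q = j \<longleftrightarrow> (\<Sum>l<j. I l) \<le> q \<and> q < (\<Sum>l<j. I l) + I j"
proof
  assume "block_of I q = j" then show "(\<Sum>l<j. I l) \<le> q \<and> q < (\<Sum>l<j. I l) + I j"
    using block_basic[OF assms(1)] by auto
next
  assume h: "(\<Sum>l<j. I l) \<le> q \<and> q < (\<Sum>l<j. I l) + I j"
  let ?P = "\<lambda>j. q < (\<Sum>l\<le>j. I l)"
  have b: "block_of I q = (LEAST j. ?P j)" by (simp add: block_of_def)
  have "(\<Sum>l\<le>j. I l) = (\<Sum>l<j. I l) + I j"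
    by (simp add: lessThan_Suc_atMost[symmetric])
  then have Pj: "?P j" using h by simp
  have "block_of I q \<le> j" unfolding b by (rule Least_le[of ?P, OF Pj])
  moreover have "\<not> block_of I q < j"
  proof
    assume lt: "block_of I q < j"
    have "(\<Sum>l\<le>block_of I q. I l) \<le> (\<Sum>l<j. I l)"
      by (rule sum_mono2) (use lt in auto)
    moreover have "?P (block_of I q)" unfolding b by (rule LeastI[of ?P, OF Pj])
    ultimately show False using h by simp
  qed
  ultimately show "block_of I q = j" by simp
qed

lemma block_card:
  assumes "j < k"
  shows "card {q \<in> {0..<(\<Sum>j<k. I j)}. block_of I q = j} = I j"
proof -
  have le: "(\<Sum>l<j. I l) + I j \<le> (\<Sum>l<k. I l)"
  proof -
    have "(\<Sum>l<j. I l) + I j = (\<Sum>l<Suc j. I l)" by simp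
    also have "\<dots> \<le> (\<Sum>l<k. I l)" by (rule sum_mono2) (use assms in auto)
    finally show ?thesis .
  qed
  have "{q \<in> {0..<(\<Sum>j<k. I j)}. block_of I q = j} = {(\<Sum>l<j. I l)..<(\<Sum>l<j. I l) + I j}"
    using le block_basic[of _ I k] by (auto simp: block_iff[OF _ assms])
  then show ?thesis by simp
qed



lemma toda:
  fixes A :: "real mat"
  assumes A: "A \<in> carrier_mat n n" and sym: "\<And>i j. i < n \<Longrightarrow> j < n \<Longrightarrow> A $$ (i,j) = A $$ (j,i)"
    and comm: "(strict_upper A - strict_lower A) * A = A * (strict_upper A - strict_lower A)"
  shows "is_diag A"
proof -
  define B where "B = strict_upper A - strict_lower A"
  have Bc: "B \<in> carrier_mat n n" using A unfolding B_def strict_upper_def strict_lower_def by (intro minus_carrier_mat) auto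
  have Be: "B $$ (i,j) = (if i < j then A $$ (i,j) else if j < i then - A $$ (i,j) else 0)"
    if "i < n" "j < n" for i j
    using that A by (auto simp: B_def strict_upper_def strict_lower_def)
  have row: "(\<Sum>l<n. (if i < l then (A $$ (i,l))^2 else if l < i then - ((A $$ (i,l))^2) else 0)) = 0"
    if i: "i < n" for i
  proof -
    have "(B * A) $$ (i,i) = (A * B) $$ (i,i)" using comm by (simp add: B_def)
    then have e: "(\<Sum>l<n. B $$ (i,l) * A $$ (l,i)) = (\<Sum>l<n. A $$ (i,l) * B $$ (l,i))"
      using mult_ent[OF Bc A i i] mult_ent[OF A Bc i i] by simp
    have "(\<Sum>l<n. B $$ (i,l) * A $$ (l,i)) - (\<Sum>l<n. A $$ (i,l) * B $$ (l,i))
       = (\<Sum>l<n. 2 * (if i < l then (A $$ (i,l))^2 else if l < i then - ((A $$ (i,l))^2) else 0))"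
      unfolding sum_subtractf[symmetric]
      by (rule sum.cong) (use i sym Be in \<open>auto simp: power2_eq_square\<close>)
    then show ?thesis using e by (simp add: sum_distrib_left[symmetric])
  qed
  have main: "\<forall>l<n. l \<noteq> i \<longrightarrow> A $$ (i,l) = 0" if "i < n" for i
    using that
  proof (induction i rule: less_induct)
    case (less i)
    have low: "A $$ (i,l) = 0" if "l < i" for l
      using less.IH[of l] that less.prems sym[of i l] by auto
    have "(\<Sum>l<n. (if i < l then (A $$ (i,l))^2 else if l < i then - ((A $$ (i,l))^2) else 0))
        = (\<Sum>l<n. (if i < l then (A $$ (i,l))^2 else 0))"
      by (rule sum.cong) (auto simp: low)
    then have s0: "(\<Sum>l<n. (if i < l then (A $$ (i,l))^2 else 0)) = 0" using row[OF less.prems] by simp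
    have "\<forall>l\<in>{..<n}. (if i < l then (A $$ (i,l))^2 else 0) = 0"
      using iffD1[OF sum_nonneg_eq_0_iff s0] by auto
    then have high: "A $$ (i,l) = 0" if "i < l" "l < n" for l
      using that by (metis lessThan_iff power_eq_0_iff zero_neq_numeral)
    show ?case using low high by (metis linorder_neqE_nat)
  qed
  show ?thesis unfolding is_diag_def using main A by auto
qed



definition offb :: "nat \<Rightarrow> (nat \<Rightarrow> nat) \<Rightarrow> real mat \<Rightarrow> bool" where
  "offb n I g \<longleftrightarrow> (\<forall>p<n. \<forall>q<n. block_of I p \<noteq> block_of I q \<longrightarrow> g $$ (p,q) = 0)"

lemma G_iff: "g \<in> G_grp n I \<longleftrightarrow> g \<in> SO_mat n \<and> offb n I g"
  by (simp add: G_grp_def offb_def)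

lemma offb_mult:
  assumes "g \<in> carrier_mat n n" "h \<in> carrier_mat n n" "offb n I g" "offb n I h"
  shows "offb n I (g * h)"
  unfolding offb_def
proof (intro allI impI)
  fix p q assume pq: "p < n" "q < n" "block_of I p \<noteq> block_of I q"
  have "(g*h) $$ (p,q) = (\<Sum>l<n. g $$ (p,l) * h $$ (l,q))" by (rule mult_ent) (use assms pq in auto)
  also have "\<dots> = 0"
  proof (rule sum.neutral, rule ballI)
    fix r assume "r \<in> {..<n}"
    then show "g $$ (p,r) * h $$ (r,q) = 0" using assms(3,4) pq unfolding offb_def
      by (cases "block_of I p = block_of I r") auto
  qed
  finally show "(g*h) $$ (p,q) = 0" .
qed

lemma offb_transpose:
  assumes "g \<in> carrier_mat n n" "offb n I g" shows "offb n I (transpose_mat g)"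
  using assms by (auto simp: offb_def)

lemma G_mult: "g \<in> G_grp n I \<Longrightarrow> h \<in> G_grp n I \<Longrightarrow> g * h \<in> G_grp n I"
  by (auto simp: G_iff SO_mult intro!: offb_mult dest: SO_carrier)

lemma G_transpose: "g \<in> G_grp n I \<Longrightarrow> transpose_mat g \<in> G_grp n I"
  by (auto simp: G_iff SO_transpose intro!: offb_transpose dest: SO_carrier)

lemma G_one: "1\<^sub>m n \<in> G_grp n I"
  by (auto simp: G_iff one_SO offb_def)

lemma coset_self: "Q \<in> carrier_mat n n \<Longrightarrow> Q \<in> coset n I Q"
  unfolding coset_def using G_one[of n I] by (auto intro!: image_eqI[where x="1\<^sub>m n"])

lemma coset_mult:
  assumes Q: "Q \<in> carrier_mat n n" and g: "g \<in> G_grp n I"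
  shows "coset n I (Q * g) = coset n I Q"
proof -
  have gc: "g \<in> carrier_mat n n" using g by (simp add: G_iff SO_carrier)
  have ggt: "g * transpose_mat g = 1\<^sub>m n" using g by (simp add: G_iff SO_right)
  show ?thesis
  proof
    show "coset n I (Q * g) \<subseteq> coset n I Q"
    proof
      fix X assume "X \<in> coset n I (Q * g)"
      then obtain h where h: "h \<in> G_grp n I" "X = Q * g * h" by (auto simp: coset_def)
      have hc: "h \<in> carrier_mat n n" using h by (simp add: G_iff SO_carrier)
      have "X = Q * (g * h)" using h Q gc hc by simp
      then show "X \<in> coset n I Q" using G_mult[OF g h(1)] by (auto simp: coset_def)
    qed
  next
    show "coset n I Q \<subseteq> coset n I (Q * g)"
    proof
      fix X assume "X \<in> coset n I Q"
      then obtain h where h: "h \<in> G_grp n I" "X = Q * h" by (auto simp: coset_def)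
      have hc: "h \<in> carrier_mat n n" using h by (simp add: G_iff SO_carrier)
      have "Q * g * (transpose_mat g * h) = Q * (g * transpose_mat g) * h"
        using Q gc hc by (simp add: assoc_mult_mat[of _ n n _ n _ n])
      also have "\<dots> = X" using ggt h Q hc by simp
      finally show "X \<in> coset n I (Q * g)"
        using G_mult[OF G_transpose[OF g] h(1)] unfolding coset_def by (auto intro!: image_eqI)
    qed
  qed
qed

lemma vert_offb:
  assumes P0: "P0 \<in> SO_mat n" and P: "P \<in> coset n I P0"
    and V: "V \<in> carrier_mat n n" and vert: "vertical n (coset n I P0) P V"
  shows "offb n I (transpose_mat P * V)"
proof -
  obtain \<gamma> where g: "\<And>t. \<gamma> t \<in> coset n I P0" "\<gamma> 0 = P"
     "\<And>p q. p < n \<Longrightarrow> q < n \<Longrightarrow> ((\<lambda>t. \<gamma> t $$ (p,q)) has_real_derivative V $$ (p,q)) (at 0)"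
    using vert unfolding vertical_def by blast
  have P0c: "P0 \<in> carrier_mat n n" using P0 by (rule SO_carrier)
  obtain g0 where g0: "g0 \<in> G_grp n I" "P = P0 * g0" using P by (auto simp: coset_def)
  have g0c: "g0 \<in> carrier_mat n n" using g0 by (simp add: G_iff SO_carrier)
  have Pc: "P \<in> carrier_mat n n" using g0 P0c g0c by simp
  have off: "offb n I (transpose_mat P * \<gamma> t)" for t
  proof -
    obtain h where h: "h \<in> G_grp n I" "\<gamma> t = P0 * h" using g(1)[of t] by (auto simp: coset_def)
    have hc: "h \<in> carrier_mat n n" using h by (simp add: G_iff SO_carrier)
    have "transpose_mat P * \<gamma> t = transpose_mat g0 * (transpose_mat P0 * P0) * h"
      using g0 h P0c g0c hc by (simp add: transpose_mult[of _ n n _ n] assoc_mult_mat[of _ n n _ n _ n])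
    also have "\<dots> = transpose_mat g0 * h" using P0 g0c hc by (simp add: SO_mat_def)
    finally show ?thesis using G_mult[OF G_transpose[OF g0(1)] h(1)] by (simp add: G_iff)
  qed
  have gc: "\<gamma> t \<in> carrier_mat n n" for t
    using g(1)[of t] P0c by (auto simp: coset_def G_iff dest!: SO_carrier)
  show ?thesis unfolding offb_def
  proof (intro allI impI)
    fix p q assume pq: "p < n" "q < n" "block_of I p \<noteq> block_of I q"
    have z: "(\<Sum>r<n. P $$ (r,p) * \<gamma> t $$ (r,q)) = 0" for t
    proof -
      have "(transpose_mat P * \<gamma> t) $$ (p,q) = (\<Sum>r<n. transpose_mat P $$ (p,r) * \<gamma> t $$ (r,q))"
        by (rule mult_ent) (use pq Pc gc in auto)
      also have "\<dots> = (\<Sum>r<n. P $$ (r,p) * \<gamma> t $$ (r,q))"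
        by (rule sum.cong) (use pq Pc in auto)
      finally show ?thesis using off[of t] pq by (simp add: offb_def)
    qed
    have d: "((\<lambda>t. \<Sum>r<n. P $$ (r,p) * \<gamma> t $$ (r,q)) has_real_derivative (\<Sum>r<n. P $$ (r,p) * V $$ (r,q))) (at 0)"
      by (intro DERIV_sum DERIV_cmult g(3)) (use pq in auto)
    have d0: "((\<lambda>t. \<Sum>r<n. P $$ (r,p) * \<gamma> t $$ (r,q)) has_real_derivative 0) (at 0)"
      unfolding z by simp
    have "(\<Sum>r<n. P $$ (r,p) * V $$ (r,q)) = 0"
      using DERIV_unique[OF d d0] .
    moreover have "(transpose_mat P * V) $$ (p,q) = (\<Sum>r<n. transpose_mat P $$ (p,r) * V $$ (r,q))"
      by (rule mult_ent) (use pq Pc V in auto)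
    moreover have "\<dots> = (\<Sum>r<n. P $$ (r,p) * V $$ (r,q))"
      by (rule sum.cong) (use pq Pc in auto)
    ultimately show "(transpose_mat P * V) $$ (p,q) = 0" by simp
  qed
qed




lemma Lam_carrier[simp]: "Lam n I lam \<in> carrier_mat n n" by (simp add: Lam_def)
lemma Lam_dims[simp]: "dim_row (Lam n I lam) = n" "dim_col (Lam n I lam) = n" by (simp_all add: Lam_def diag_of_def)
lemma diag_dims[simp]: "dim_row (diag_of n d) = n" "dim_col (diag_of n d) = n" by (simp_all add: diag_of_def)
lemma mc[simp]: "A \<in> carrier_mat n n \<Longrightarrow> B \<in> carrier_mat n n \<Longrightarrow> A * B \<in> carrier_mat n n"
  by (rule mult_carrier_mat)
lemma asq: "A \<in> carrier_mat n n \<Longrightarrow> B \<in> carrier_mat n n \<Longrightarrow> C \<in> carrier_mat n n \<Longrightarrow> A * B * C = A * (B * C)"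
  by (rule assoc_mult_mat)

lemma offb_comm:
  assumes "g \<in> carrier_mat n n" "offb n I g"
  shows "g * Lam n I lam = Lam n I lam * g"
proof (rule eq_matI)
  fix p q assume "p < dim_row (Lam n I lam * g)" "q < dim_col (Lam n I lam * g)"
  then have pq: "p < n" "q < n" using assms by auto
  show "(g * Lam n I lam) $$ (p,q) = (Lam n I lam * g) $$ (p,q)"
    unfolding Lam_def using mult_diag_right[OF assms(1) pq] mult_diag_left[OF assms(1) pq] assms(2) pq
    by (cases "block_of I p = block_of I q") (auto simp: offb_def)
qed (use assms in auto)

lemma comm_offb:
  assumes lam_inj: "\<And>a b. a < k \<Longrightarrow> b < k \<Longrightarrow> lam a = lam b \<Longrightarrow> a = b"
    and n: "n = (\<Sum>j<k. I j)" and g: "g \<in> carrier_mat n n"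
    and c: "g * Lam n I lam = Lam n I lam * g"
  shows "offb n I g"
  unfolding offb_def
proof (intro allI impI)
  fix p q assume pq: "p < n" "q < n" "block_of I p \<noteq> block_of I q"
  have "(g * Lam n I lam) $$ (p,q) = (Lam n I lam * g) $$ (p,q)" using c by simp
  then have e: "g $$ (p,q) * lam (block_of I q) = lam (block_of I p) * g $$ (p,q)"
    unfolding Lam_def using mult_diag_right[OF g pq(1,2)] mult_diag_left[OF g pq(1,2)] by simp
  have "block_of I p < k" "block_of I q < k" using block_basic pq n by blast+
  then have "lam (block_of I q) \<noteq> lam (block_of I p)" using lam_inj pq(3) by metis
  then show "g $$ (p,q) = 0" using e by (metis mult.commute mult_left_cancel)
qed

lemma conj_carrier[simp]: "P \<in> carrier_mat n n \<Longrightarrow> conjL n I lam P \<in> carrier_mat n n"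
  by (simp add: conjL_def)

lemma conj_sym:
  assumes "P \<in> carrier_mat n n" "i < n" "j < n"
  shows "conjL n I lam P $$ (i,j) = conjL n I lam P $$ (j,i)"
proof -
  have t: "transpose_mat (Lam n I lam) = Lam n I lam"
    by (rule eq_matI) (auto simp: Lam_def diag_of_def)
  have "transpose_mat (conjL n I lam P) = conjL n I lam P"
    unfolding conjL_def using assms
    by (simp add: transpose_mult[of _ n n _ n] t asq[of _ n])
  then have "transpose_mat (conjL n I lam P) $$ (j,i) = conjL n I lam P $$ (j,i)" by simp
  moreover have "dim_row (conjL n I lam P) = n" "dim_col (conjL n I lam P) = n"
    using conj_carrier[OF assms(1)] by auto
  ultimately show ?thesis using assms by simp
qed

lemma zero_iff:
  assumes lam_inj: "\<And>a b. a < k \<Longrightarrow> b < k \<Longrightarrow> lam a = lam b \<Longrightarrow> a = b"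
    and n: "n = (\<Sum>j<k. I j)" and P0: "P0 \<in> SO_mat n"
  shows "xi_zero n I lam (coset n I P0) \<longleftrightarrow> (\<exists>P\<in>coset n I P0. is_diag (conjL n I lam P))"
proof
  have P0c: "P0 \<in> carrier_mat n n" using P0 by (rule SO_carrier)
  assume "xi_zero n I lam (coset n I P0)"
  then obtain P where P: "P \<in> coset n I P0" and v: "vertical n (coset n I P0) P (Mfield n I lam P)"
    unfolding xi_zero_def by blast
  obtain g0 where g0: "g0 \<in> G_grp n I" "P = P0 * g0" using P by (auto simp: coset_def)
  have PSO: "P \<in> SO_mat n" using g0 SO_mult[OF P0] by (simp add: G_iff)
  have Pc: "P \<in> carrier_mat n n" using PSO by (rule SO_carrier)
  define A where "A = conjL n I lam P"
  define B where "B = strict_upper A - strict_lower A"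
  define L where "L = Lam n I lam"
  define X where "X = transpose_mat P * (B * P)"
  have Ac: "A \<in> carrier_mat n n" using Pc by (simp add: A_def)
  have Bc: "B \<in> carrier_mat n n" using Ac unfolding B_def strict_upper_def strict_lower_def
    by (intro minus_carrier_mat) auto
  have Lc: "L \<in> carrier_mat n n" by (simp add: L_def)
  have Ptc: "transpose_mat P \<in> carrier_mat n n" using Pc by simp
  have Xc: "X \<in> carrier_mat n n" using Ptc Bc Pc by (simp add: X_def)
  have M: "Mfield n I lam P = B * P" by (simp add: Mfield_def B_def A_def)
  have "offb n I X" unfolding X_def
    using vert_offb[OF P0 P _ v] M Bc Pc by simp
  then have XL: "X * L = L * X" unfolding L_def by (rule offb_comm[OF Xc])
  have PPt: "P * transpose_mat P = 1\<^sub>m n" using PSO by (rule SO_right)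
  have BP: "B * P = P * X"
  proof -
    have "P * X = (P * transpose_mat P) * (B * P)" unfolding X_def using Pc Ptc Bc by (simp add: asq[of _ n])
    then show ?thesis using PPt Bc Pc by simp
  qed
  have XPt: "X * transpose_mat P = transpose_mat P * B"
  proof -
    have "X * transpose_mat P = transpose_mat P * B * (P * transpose_mat P)"
      unfolding X_def using Pc Ptc Bc by (simp add: asq[of _ n])
    then show ?thesis using PPt Bc Ptc by simp
  qed
  have A_eq: "A = P * L * transpose_mat P" by (simp add: A_def conjL_def L_def)
  have "B * A = (B * P) * L * transpose_mat P" unfolding A_eq using Bc Pc Lc Ptc by (simp add: asq[of _ n])
  also have "\<dots> = P * (X * L) * transpose_mat P" unfolding BP using Xc Pc Lc Ptc by (simp add: asq[of _ n])
  also have "\<dots> = P * L * (X * transpose_mat P)" unfolding XL using Xc Pc Lc Ptc by (simp add: asq[of _ n])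
  also have "\<dots> = A * B" unfolding XPt A_eq using Bc Pc Lc Ptc by (simp add: asq[of _ n])
  finally have "B * A = A * B" .
  then have "is_diag A" unfolding B_def
    by (intro toda[OF Ac]) (use conj_sym Pc in \<open>auto simp: A_def\<close>)
  then show "\<exists>P\<in>coset n I P0. is_diag (conjL n I lam P)" using P by (auto simp: A_def)
next
  have P0c: "P0 \<in> carrier_mat n n" using P0 by (rule SO_carrier)
  assume "\<exists>P\<in>coset n I P0. is_diag (conjL n I lam P)"
  then obtain P where P: "P \<in> coset n I P0" and d: "is_diag (conjL n I lam P)" by blast
  obtain g0 where g0: "g0 \<in> G_grp n I" "P = P0 * g0" using P by (auto simp: coset_def)
  have PSO: "P \<in> SO_mat n" using g0 SO_mult[OF P0] by (simp add: G_iff)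
  have Pc: "P \<in> carrier_mat n n" using PSO by (rule SO_carrier)
  define A where "A = conjL n I lam P"
  define B where "B = strict_upper A - strict_lower A"
  have Ac: "A \<in> carrier_mat n n" using Pc by (simp add: A_def)
  have Bc: "B \<in> carrier_mat n n" using Ac unfolding B_def strict_upper_def strict_lower_def
    by (intro minus_carrier_mat) auto
  have B0: "B $$ (i,j) = 0" if "i < n" "j < n" for i j
    using d Ac that unfolding B_def A_def strict_upper_def strict_lower_def is_diag_def
    by auto
  have M: "Mfield n I lam P $$ (p,q) = 0" if "p < n" "q < n" for p q
  proof -
    have "Mfield n I lam P $$ (p,q) = (\<Sum>l<n. B $$ (p,l) * P $$ (l,q))"
      unfolding Mfield_def B_def[symmetric] A_def[symmetric] by (rule mult_ent) (use that Bc Pc in auto)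
    also have "\<dots> = 0" using B0 that by simp
    finally show ?thesis .
  qed
  have "vertical n (coset n I P0) P (Mfield n I lam P)"
    unfolding vertical_def
    by (rule exI[where x="\<lambda>t. P"]) (use P M in auto)
  then show "xi_zero n I lam (coset n I P0)" using P unfolding xi_zero_def by blast
qed



lemma exists_sigma:
  assumes tau: "\<tau> \<in> multiset_perms n k I" and n: "n = (\<Sum>j<k. I j)"
  shows "\<exists>\<sigma>. (\<forall>p<n. \<sigma> p < n \<and> block_of I (\<sigma> p) = \<tau> p) \<and> inj_on \<sigma> {0..<n}"
proof -
  define R where "R j = {p \<in> {0..<n}. \<tau> p = j}" for j
  define T where "T j = {q \<in> {0..<n}. block_of I q = j}" for j
  have "\<forall>j\<in>{..<k}. \<exists>h. bij_betw h (R j) (T j)"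
  proof
    fix j assume j: "j \<in> {..<k}"
    have "card (R j) = I j" using tau j by (auto simp: multiset_perms_def R_def)
    moreover have "card (T j) = I j" using block_card[of j k I] j n by (auto simp: T_def)
    ultimately show "\<exists>h. bij_betw h (R j) (T j)"
      by (intro finite_same_card_bij) (auto simp: R_def T_def)
  qed
  then obtain H where H: "\<And>j. j < k \<Longrightarrow> bij_betw (H j) (R j) (T j)" by (metis lessThan_iff bchoice)
  define \<sigma> where "\<sigma> p = H (\<tau> p) p" for p
  have tk: "\<tau> p < k" if "p < n" for p using tau that by (auto simp: multiset_perms_def PiE_def Pi_def)
  have mem: "\<sigma> p \<in> T (\<tau> p)" if "p < n" for p
  proof -
    have "p \<in> R (\<tau> p)" using that by (simp add: R_def)
    then show ?thesis using H[OF tk[OF that]] unfolding \<sigma>_def bij_betw_def by auto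
  qed
  have "inj_on \<sigma> {0..<n}"
  proof (rule inj_onI)
    fix p p' assume pp: "p \<in> {0..<n}" "p' \<in> {0..<n}" "\<sigma> p = \<sigma> p'"
    have "\<tau> p = \<tau> p'" using mem[of p] mem[of p'] pp by (auto simp: T_def)
    moreover have "p \<in> R (\<tau> p)" "p' \<in> R (\<tau> p)" using pp \<open>\<tau> p = \<tau> p'\<close> by (auto simp: R_def)
    ultimately show "p = p'" using H[OF tk, of p] pp unfolding bij_betw_def inj_on_def \<sigma>_def by auto
  qed
  then show ?thesis using mem by (auto simp: T_def)
qed

lemma exists_P:
  assumes tau: "\<tau> \<in> multiset_perms n k I" and n: "n = (\<Sum>j<k. I j)"
  shows "\<exists>P\<in>SO_mat n. conjL n I lam P = diag_of n (\<lambda>p. lam (\<tau> p))"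
proof -
  obtain \<sigma> where s: "\<And>p. p < n \<Longrightarrow> \<sigma> p < n \<and> block_of I (\<sigma> p) = \<tau> p" and inj: "inj_on \<sigma> {0..<n}"
    using exists_sigma[OF tau n] by blast
  define Q :: "real mat" where "Q = mat n n (\<lambda>(p,q). if q = \<sigma> p then 1 else 0)"
  have Qc: "Q \<in> carrier_mat n n" by (simp add: Q_def)
  have Qe: "Q $$ (p,q) = (if q = \<sigma> p then 1 else 0)" if "p < n" "q < n" for p q
    using that by (simp add: Q_def)
  have QQt: "Q * transpose_mat Q = 1\<^sub>m n"
  proof (rule eq_matI)
    fix p r assume "p < dim_row (1\<^sub>m n :: real mat)" "r < dim_col (1\<^sub>m n :: real mat)"
    then have pr: "p < n" "r < n" by auto
    have "(Q * transpose_mat Q) $$ (p,r) = (\<Sum>q<n. Q $$ (p,q) * transpose_mat Q $$ (q,r))"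
      by (rule mult_ent) (use Qc pr in auto)
    also have "\<dots> = (\<Sum>q<n. if q = \<sigma> p then (if \<sigma> p = \<sigma> r then 1 else 0) else 0)"
      by (rule sum.cong) (use Qc pr Qe in auto)
    also have "\<dots> = (if \<sigma> p = \<sigma> r then 1 else 0)" using s[OF pr(1)] by simp
    also have "\<dots> = 1\<^sub>m n $$ (p,r)" using inj pr by (auto simp: inj_on_def)
    finally show "(Q * transpose_mat Q) $$ (p,r) = 1\<^sub>m n $$ (p,r)" .
  qed (use Qc in auto)
  have QtQ: "transpose_mat Q * Q = 1\<^sub>m n"
    by (rule mat_mult_left_right_inverse[OF Qc _ QQt]) (use Qc in simp)
  have conjQ: "conjL n I lam Q = diag_of n (\<lambda>p. lam (\<tau> p))"
  proof (rule eq_matI)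
    fix p r assume "p < dim_row (diag_of n (\<lambda>p. lam (\<tau> p)))" "r < dim_col (diag_of n (\<lambda>p. lam (\<tau> p)))"
    then have pr: "p < n" "r < n" by auto
    have QLc: "Q * Lam n I lam \<in> carrier_mat n n" using Qc by simp
    have "conjL n I lam Q $$ (p,r) = (\<Sum>q<n. (Q * Lam n I lam) $$ (p,q) * transpose_mat Q $$ (q,r))"
      unfolding conjL_def by (rule mult_ent) (use QLc Qc pr in auto)
    also have "\<dots> = (\<Sum>q<n. if q = \<sigma> p then (if \<sigma> p = \<sigma> r then lam (block_of I (\<sigma> p)) else 0) else 0)"
    proof (rule sum.cong)
      fix q assume q: "q \<in> {..<n}"
      have QL: "(Q * Lam n I lam) $$ (p,q) = Q $$ (p,q) * lam (block_of I q)"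
        unfolding Lam_def by (rule mult_diag_right[OF Qc pr(1)]) (use q in auto)
      show "(Q * Lam n I lam) $$ (p,q) * transpose_mat Q $$ (q,r) = (if q = \<sigma> p then (if \<sigma> p = \<sigma> r then lam (block_of I (\<sigma> p)) else 0) else 0)"
        unfolding QL using Qc pr Qe q by auto
    qed simp
    also have "\<dots> = (if \<sigma> p = \<sigma> r then lam (block_of I (\<sigma> p)) else 0)" using s[OF pr(1)] by simp
    also have "\<dots> = diag_of n (\<lambda>p. lam (\<tau> p)) $$ (p,r)" using inj pr s[OF pr(1)] by (auto simp: inj_on_def) (metis atLeastLessThan_iff zero_le)
    finally show "conjL n I lam Q $$ (p,r) = diag_of n (\<lambda>p. lam (\<tau> p)) $$ (p,r)" .
  qed (use Qc in \<open>auto simp: conjL_def\<close>)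
  have "det (transpose_mat Q * Q) = 1" using QtQ by simp
  then have dsq: "det Q * det Q = 1" using Qc by (simp add: det_mult[OF _ Qc] det_transpose)
  show ?thesis
  proof (cases "det Q = 1")
    case True
    then show ?thesis using Qc QtQ conjQ by (auto simp: SO_mat_def)
  next
    case False
    then have dm: "det Q = -1" using dsq by (metis mult_cancel_left1 square_eq_1_iff)
    have n0: "n > 0"
    proof (rule ccontr)
      assume "\<not> n > 0"
      then have "Q = 1\<^sub>m 0" using Qc by (intro eq_matI) auto
      then show False using dm by simp
    qed
    define s :: "nat \<Rightarrow> real" where "s p = (if p = 0 then -1 else 1)" for p
    define D where "D = diag_of n s"
    have DM: "D = multrow_mat n 0 (-1)" by (rule eq_matI) (auto simp: D_def s_def)
    have detD: "det D = -1" unfolding DM by (rule det_multrow_mat[OF n0])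
    have Dc: "D \<in> carrier_mat n n" by (simp add: D_def)
    have DtD: "transpose_mat D * D = 1\<^sub>m n"
    proof (rule eq_matI)
      fix p r assume "p < dim_row (1\<^sub>m n :: real mat)" "r < dim_col (1\<^sub>m n :: real mat)"
      then have pr: "p < n" "r < n" by auto
      have "transpose_mat D = D" by (rule eq_matI) (auto simp: D_def)
      then show "(transpose_mat D * D) $$ (p,r) = 1\<^sub>m n $$ (p,r)"
        using mult_diag_right[OF Dc pr] pr by (auto simp: D_def s_def)
    qed (use Dc in auto)
    define P where "P = D * Q"
    have Pc: "P \<in> carrier_mat n n" using Dc Qc by (simp add: P_def)
    have "transpose_mat P * P = transpose_mat Q * (transpose_mat D * D) * Q"
      unfolding P_def using Dc Qc by (simp add: transpose_mult[of _ n n _ n] asq[of _ n])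
    also have "\<dots> = 1\<^sub>m n" using DtD QtQ Qc by simp
    finally have PtP: "transpose_mat P * P = 1\<^sub>m n" .
    have detP: "det P = 1" unfolding P_def using det_mult[OF Dc Qc] detD dm by simp
    have "conjL n I lam P = D * conjL n I lam Q * transpose_mat D"
      unfolding P_def conjL_def using Dc Qc by (simp add: transpose_mult[of _ n n _ n] asq[of _ n])
    also have "\<dots> = diag_of n (\<lambda>p. lam (\<tau> p))"
    proof (rule eq_matI)
      fix p r assume "p < dim_row (diag_of n (\<lambda>p. lam (\<tau> p)))" "r < dim_col (diag_of n (\<lambda>p. lam (\<tau> p)))"
      then have pr: "p < n" "r < n" by auto
      have "transpose_mat D = D" by (rule eq_matI) (auto simp: D_def)
      moreover have "D * diag_of n (\<lambda>p. lam (\<tau> p)) \<in> carrier_mat n n" using Dc by simp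
      ultimately have "(D * conjL n I lam Q * transpose_mat D) $$ (p,r) = (D * diag_of n (\<lambda>p. lam (\<tau> p))) $$ (p,r) * s r"
        using mult_diag_right[of "D * diag_of n (\<lambda>p. lam (\<tau> p))" n n p r s] pr unfolding conjQ
        by (simp add: D_def del: index_mult_mat)
      also have "\<dots> = s p * diag_of n (\<lambda>p. lam (\<tau> p)) $$ (p,r) * s r"
        unfolding D_def by (subst mult_diag_left) (use pr in auto)
      finally show "(D * conjL n I lam Q * transpose_mat D) $$ (p,r) = diag_of n (\<lambda>p. lam (\<tau> p)) $$ (p,r)"
        using pr by (simp add: s_def)
    qed (use Dc in auto)
    finally show ?thesis using Pc PtP detP by (auto simp: SO_mat_def)
  qed
qed



lemma diag_to_tau:
  assumes lam_inj: "\<And>a b. a < k \<Longrightarrow> b < k \<Longrightarrow> lam a = lam b \<Longrightarrow> a = b"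
    and n: "n = (\<Sum>j<k. I j)" and P: "P \<in> SO_mat n" and dg: "is_diag (conjL n I lam P)"
  shows "\<exists>\<tau>\<in>multiset_perms n k I. conjL n I lam P = diag_of n (\<lambda>p. lam (\<tau> p))"
proof -
  have Pc: "P \<in> carrier_mat n n" using P by (rule SO_carrier)
  have Ptc: "transpose_mat P \<in> carrier_mat n n" using Pc by simp
  define A where "A = conjL n I lam P"
  define d where "d p = A $$ (p,p)" for p
  have Ac: "A \<in> carrier_mat n n" using Pc by (simp add: A_def)
  have Ad: "A = diag_of n d"
    by (rule eq_matI) (use dg Ac in \<open>auto simp: d_def is_diag_def A_def\<close>)
  have PtP: "transpose_mat P * P = 1\<^sub>m n" using P by (simp add: SO_mat_def)
  have PPt: "P * transpose_mat P = 1\<^sub>m n" using P by (rule SO_right)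
  have AP: "A * P = P * Lam n I lam"
  proof -
    have "A * P = P * Lam n I lam * (transpose_mat P * P)"
      unfolding A_def conjL_def using Pc Ptc by (simp add: asq[of _ n])
    then show ?thesis using PtP Pc by simp
  qed
  have bk: "block_of I q < k" if "q < n" for q using block_basic that n by blast
  have nz: "P $$ (p,q) \<noteq> 0 \<Longrightarrow> d p = lam (block_of I q)" if pq: "p < n" "q < n" for p q
  proof -
    have "(A * P) $$ (p,q) = (P * Lam n I lam) $$ (p,q)" using AP by simp
    then have "d p * P $$ (p,q) = P $$ (p,q) * lam (block_of I q)"
      unfolding Ad Lam_def by (simp only: mult_diag_left[OF Pc pq] mult_diag_right[OF Pc pq])
    then show "P $$ (p,q) \<noteq> 0 \<Longrightarrow> d p = lam (block_of I q)" by simp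
  qed
  have rowsum: "(\<Sum>q<n. (P $$ (p,q))^2) = 1" if "p < n" for p
  proof -
    have "(P * transpose_mat P) $$ (p,p) = (\<Sum>q<n. P $$ (p,q) * transpose_mat P $$ (q,p))"
      by (rule mult_ent) (use Pc Ptc that in auto)
    also have "\<dots> = (\<Sum>q<n. (P $$ (p,q))^2)" by (rule sum.cong) (use Pc that in \<open>auto simp: power2_eq_square\<close>)
    finally show ?thesis using PPt that by simp
  qed
  have colsum: "(\<Sum>p<n. (P $$ (p,q))^2) = 1" if "q < n" for q
  proof -
    have "(transpose_mat P * P) $$ (q,q) = (\<Sum>p<n. transpose_mat P $$ (q,p) * P $$ (p,q))"
      by (rule mult_ent) (use Pc Ptc that in auto)
    also have "\<dots> = (\<Sum>p<n. (P $$ (p,q))^2)" by (rule sum.cong) (use Pc that in \<open>auto simp: power2_eq_square\<close>)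
    finally show ?thesis using PtP that by simp
  qed
  have exq: "\<exists>q. q < n \<and> P $$ (p,q) \<noteq> 0" if "p < n" for p
  proof (rule ccontr)
    assume "\<not> ?thesis"
    then have "(\<Sum>q<n. (P $$ (p,q))^2) = 0" by simp
    then show False using rowsum[OF that] by simp
  qed
  define \<tau> where "\<tau> p = (if p < n then block_of I (SOME q. q < n \<and> P $$ (p,q) \<noteq> 0) else undefined)" for p
  have tq: "\<tau> p < k \<and> d p = lam (\<tau> p)" if "p < n" for p
  proof -
    let ?q = "SOME q. q < n \<and> P $$ (p,q) \<noteq> 0"
    have "?q < n \<and> P $$ (p,?q) \<noteq> 0" using someI_ex[OF exq[OF that]] .
    then show ?thesis using nz[OF that] bk that by (simp add: \<tau>_def)
  qed
  have key: "\<tau> p = block_of I q" if "p < n" "q < n" "P $$ (p,q) \<noteq> 0" for p q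
    using lam_inj[of "\<tau> p" "block_of I q"] tq[OF that(1)] nz[OF that(1,2)] that bk by simp
  have card: "card {p \<in> {0..<n}. \<tau> p = j} = I j" if j: "j < k" for j
  proof -
    define R where "R = {p \<in> {..<n}. \<tau> p = j}"
    define T where "T = {q \<in> {..<n}. block_of I q = j}"
    have fR: "finite R" "R \<subseteq> {..<n}" and fT: "finite T" "T \<subseteq> {..<n}" by (auto simp: R_def T_def)
    have "real (card R) = (\<Sum>p\<in>R. (\<Sum>q<n. (P $$ (p,q))^2))"
      using rowsum by (simp add: R_def)
    also have "\<dots> = (\<Sum>p\<in>R. (\<Sum>q\<in>T. (P $$ (p,q))^2))"
    proof (rule sum.cong[OF refl])
      fix p assume p: "p \<in> R"
      show "(\<Sum>q<n. (P $$ (p,q))^2) = (\<Sum>q\<in>T. (P $$ (p,q))^2)"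
        by (rule sum.mono_neutral_right) (use p fT key in \<open>auto simp: R_def T_def\<close>)
    qed
    also have "\<dots> = (\<Sum>q\<in>T. (\<Sum>p\<in>R. (P $$ (p,q))^2))" by (rule sum.swap)
    also have "\<dots> = (\<Sum>q\<in>T. (\<Sum>p<n. (P $$ (p,q))^2))"
    proof (rule sum.cong[OF refl])
      fix q assume q: "q \<in> T"
      show "(\<Sum>p\<in>R. (P $$ (p,q))^2) = (\<Sum>p<n. (P $$ (p,q))^2)"
        by (rule sum.mono_neutral_left) (use q fR key in \<open>auto simp: R_def T_def\<close>)
    qed
    also have "\<dots> = real (card T)" using colsum by (simp add: T_def)
    finally have "card R = card T" by simp
    moreover have "card T = I j" using block_card[of j k I] j n by (simp add: T_def atLeast0LessThan)
    ultimately show ?thesis by (simp add: R_def atLeast0LessThan)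
  qed
  have "\<tau> \<in> multiset_perms n k I"
    unfolding multiset_perms_def using tq card by (auto simp: PiE_def Pi_def extensional_def \<tau>_def)
  moreover have "A = diag_of n (\<lambda>p. lam (\<tau> p))" unfolding Ad
    by (rule eq_matI) (use tq in auto)
  ultimately show ?thesis by (auto simp: A_def)
qed



lemma conj_coset:
  assumes P: "P \<in> carrier_mat n n" and g: "g \<in> G_grp n I"
  shows "conjL n I lam (P * g) = conjL n I lam P"
proof -
  have gc: "g \<in> carrier_mat n n" using g by (simp add: G_iff SO_carrier)
  have ggt: "g * transpose_mat g = 1\<^sub>m n" using g by (simp add: G_iff SO_right)
  have gL: "g * Lam n I lam = Lam n I lam * g" using g gc G_iff by (intro offb_comm) auto
  have "conjL n I lam (P * g) = P * (g * Lam n I lam) * (transpose_mat g * transpose_mat P)"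
    unfolding conjL_def using P gc by (simp add: transpose_mult[of _ n n _ n] asq[of _ n])
  also have "\<dots> = P * Lam n I lam * (g * transpose_mat g) * transpose_mat P"
    unfolding gL using P gc by (simp add: asq[of _ n])
  also have "\<dots> = conjL n I lam P" unfolding ggt conjL_def using P by simp
  finally show ?thesis .
qed

lemma is_diag_diag: "is_diag (diag_of n d)"
  by (simp add: is_diag_def)

theorem proposition4p1:
  fixes k n :: nat and I :: "nat \<Rightarrow> nat" and lam :: "nat \<Rightarrow> real"
  assumes lam_inc: "\<And>a b. a < b \<Longrightarrow> b < k \<Longrightarrow> lam a < lam b"
    and I_pos: "\<And>j. j < k \<Longrightarrow> I j > 0"
    and n_def: "n = (\<Sum>j<k. I j)"
  shows "(\<forall>C\<in>Flag n I. xi_zero n I lam C \<longleftrightarrow> (\<exists>P\<in>C. is_diag (conjL n I lam P)))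
       \<and> (\<exists>f. bij_betw f (multiset_perms n k I) {C \<in> Flag n I. xi_zero n I lam C}
             \<and> (\<forall>\<tau>\<in>multiset_perms n k I. \<forall>P\<in>f \<tau>.
                  conjL n I lam P = diag_of n (\<lambda>p. lam (\<tau> p))))"
proof -
  have lam_inj: "a = b" if "a < k" "b < k" "lam a = lam b" for a b
    using lam_inc[of a b] lam_inc[of b a] that by (metis less_irrefl linorder_neqE_nat)
  have part1: "\<forall>C\<in>Flag n I. xi_zero n I lam C \<longleftrightarrow> (\<exists>P\<in>C. is_diag (conjL n I lam P))"
  proof
    fix C assume "C \<in> Flag n I"
    then obtain Q where Q: "Q \<in> SO_mat n" "C = coset n I Q" by (auto simp: Flag_def)
    show "xi_zero n I lam C \<longleftrightarrow> (\<exists>P\<in>C. is_diag (conjL n I lam P))"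
      unfolding Q(2) by (rule zero_iff[OF lam_inj n_def Q(1)])
  qed
  define S where "S = multiset_perms n k I"
  define Pt where "Pt \<tau> = (SOME P. P \<in> SO_mat n \<and> conjL n I lam P = diag_of n (\<lambda>p. lam (\<tau> p)))" for \<tau>
  have Pt: "Pt \<tau> \<in> SO_mat n \<and> conjL n I lam (Pt \<tau>) = diag_of n (\<lambda>p. lam (\<tau> p))" if "\<tau> \<in> S" for \<tau>
  proof -
    have "\<exists>P. P \<in> SO_mat n \<and> conjL n I lam P = diag_of n (\<lambda>p. lam (\<tau> p))"
      using exists_P[OF that[unfolded S_def] n_def, of lam] by blast
    then show ?thesis unfolding Pt_def by (rule someI_ex)
  qed
  define f where "f \<tau> = coset n I (Pt \<tau>)" for \<tau>
  have conj_f: "conjL n I lam P = diag_of n (\<lambda>p. lam (\<tau> p))" if tS: "\<tau> \<in> S" and Pf: "P \<in> f \<tau>" for \<tau> P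
  proof -
    obtain g where g: "g \<in> G_grp n I" "P = Pt \<tau> * g" using Pf by (auto simp: f_def coset_def)
    show ?thesis using conj_coset[OF SO_carrier g(1)] Pt[OF tS] g(2) by simp
  qed
  have inj: "inj_on f S"
  proof (rule inj_onI)
    fix \<tau> \<tau>' assume t: "\<tau> \<in> S" "\<tau>' \<in> S" "f \<tau> = f \<tau>'"
    have "Pt \<tau> \<in> f \<tau>'" using t(3) Pt[OF t(1)] coset_self SO_carrier by (metis f_def)
    then have e: "diag_of n (\<lambda>p. lam (\<tau> p)) = diag_of n (\<lambda>p. lam (\<tau>' p))"
      using conj_f[OF t(2)] Pt[OF t(1)] by simp
    show "\<tau> = \<tau>'"
    proof (rule extensionalityI[of _ "{0..<n}"])
      show "\<tau> \<in> extensional {0..<n}" "\<tau>' \<in> extensional {0..<n}"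
        using t by (auto simp: S_def multiset_perms_def PiE_def)
      fix p assume p: "p \<in> {0..<n}"
      have "diag_of n (\<lambda>p. lam (\<tau> p)) $$ (p,p) = diag_of n (\<lambda>p. lam (\<tau>' p)) $$ (p,p)" using e by simp
      then have "lam (\<tau> p) = lam (\<tau>' p)" using p by simp
      moreover have "\<tau> p < k" "\<tau>' p < k" using t p by (auto simp: S_def multiset_perms_def PiE_def Pi_def)
      ultimately show "\<tau> p = \<tau>' p" using lam_inj by blast
    qed
  qed
  have img: "f ` S = {C \<in> Flag n I. xi_zero n I lam C}"
  proof
    show "f ` S \<subseteq> {C \<in> Flag n I. xi_zero n I lam C}"
    proof
      fix C assume "C \<in> f ` S"
      then obtain \<tau> where t: "\<tau> \<in> S" "C = f \<tau>" by blast
      have "C \<in> Flag n I" using Pt[OF t(1)] t(2) by (auto simp: Flag_def f_def)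
      moreover have "xi_zero n I lam C"
      proof -
        have PtSO: "Pt \<tau> \<in> SO_mat n" using Pt[OF t(1)] by blast
        have "\<exists>P\<in>coset n I (Pt \<tau>). is_diag (conjL n I lam P)"
          by (rule bexI[of _ "Pt \<tau>"]) (use Pt[OF t(1)] coset_self[OF SO_carrier[OF PtSO]] in \<open>simp_all add: is_diag_diag\<close>)
        then show ?thesis using zero_iff[OF lam_inj n_def PtSO] t(2) unfolding f_def by blast
      qed
      ultimately show "C \<in> {C \<in> Flag n I. xi_zero n I lam C}" by simp
    qed
  next
    show "{C \<in> Flag n I. xi_zero n I lam C} \<subseteq> f ` S"
    proof
      fix C assume C: "C \<in> {C \<in> Flag n I. xi_zero n I lam C}"
      then obtain P0 where P0: "P0 \<in> SO_mat n" "C = coset n I P0" by (auto simp: Flag_def)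
      then obtain P where P: "P \<in> C" "is_diag (conjL n I lam P)"
        using zero_iff[OF lam_inj n_def P0(1)] C by auto
      obtain g0 where g0: "g0 \<in> G_grp n I" "P = P0 * g0" using P P0 by (auto simp: coset_def)
      have PSO: "P \<in> SO_mat n" using g0 SO_mult[OF P0(1)] by (simp add: G_iff)
      have e: "coset n I P = coset n I P0" unfolding g0(2) by (rule coset_mult[OF SO_carrier[OF P0(1)] g0(1)])
      have CP: "C = coset n I P" by (simp only: P0(2) e)
      obtain \<tau> where t: "\<tau> \<in> S" "conjL n I lam P = diag_of n (\<lambda>p. lam (\<tau> p))"
        using diag_to_tau[OF lam_inj n_def PSO P(2)] unfolding S_def by blast
      define Q where "Q = Pt \<tau>"
      have QSO: "Q \<in> SO_mat n" and cQ: "conjL n I lam Q = conjL n I lam P" using Pt[OF t(1)] t(2) by (auto simp: Q_def)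
      have Qc: "Q \<in> carrier_mat n n" and Pc: "P \<in> carrier_mat n n" using QSO PSO by (auto intro: SO_carrier)
      have Qtc: "transpose_mat Q \<in> carrier_mat n n" using Qc by simp
      define g where "g = transpose_mat Q * P"
      have gc: "g \<in> carrier_mat n n" using Qtc Pc by (simp add: g_def)
      have gSO: "g \<in> SO_mat n" unfolding g_def by (rule SO_mult[OF SO_transpose[OF QSO] PSO])
      have PtP: "transpose_mat P * P = 1\<^sub>m n" using PSO by (simp add: SO_mat_def)
      have QtQ: "transpose_mat Q * Q = 1\<^sub>m n" using QSO by (simp add: SO_mat_def)
      have QQt: "Q * transpose_mat Q = 1\<^sub>m n" using QSO by (rule SO_right)
      have Ptc: "transpose_mat P \<in> carrier_mat n n" using Pc by simp
      have Lc: "Lam n I lam \<in> carrier_mat n n" by simp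
      have "g * Lam n I lam = transpose_mat Q * (P * Lam n I lam * transpose_mat P) * P"
      proof -
        have "transpose_mat Q * (P * Lam n I lam * transpose_mat P) * P = transpose_mat Q * P * Lam n I lam * (transpose_mat P * P)"
          using Qtc Pc Ptc Lc by (simp add: asq[of _ n])
        then show ?thesis using PtP Qtc Pc by (simp add: g_def)
      qed
      also have "\<dots> = transpose_mat Q * (Q * Lam n I lam * transpose_mat Q) * P"
        using cQ by (simp add: conjL_def)
      also have "\<dots> = (transpose_mat Q * Q) * Lam n I lam * (transpose_mat Q * P)"
        using Qtc Qc Pc Lc by (simp add: asq[of _ n])
      also have "\<dots> = Lam n I lam * g" unfolding QtQ g_def using Lc by simp
      finally have gLg: "g * Lam n I lam = Lam n I lam * g" .
      have "offb n I g" by (rule comm_offb[OF lam_inj n_def gc gLg])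
      then have gG: "g \<in> G_grp n I" using gSO by (simp add: G_iff)
      have "Q * g = P" unfolding g_def using Qc Qtc Pc QQt by (simp add: asq[of _ n, symmetric])
      then have "C = f \<tau>" using CP coset_mult[OF Qc gG] by (simp add: f_def Q_def)
      then show "C \<in> f ` S" using t(1) by blast
    qed
  qed
  have "bij_betw f S {C \<in> Flag n I. xi_zero n I lam C}" using inj img by (simp add: bij_betw_def)
  then show ?thesis
    by (intro conjI[OF part1] exI[of _ f] conjI) (use conj_f in \<open>simp_all add: S_def\<close>)
qed


end
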